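(* Let $f:\mathbb R^n\to\mathbb R^n$ satisfy the QUAD condition with constant $\delta>0$, let $\epsilon_1,\epsilon_2>0$, $0<p<1$, $q>1$, and let $s:[0,\infty)\to\mathbb R^n$ satisfy $\dot s=f(s)$. Consider $$\dot x=f(x)-\epsilon_1\mathrm{sig}^p(x-s)-\epsilon_2\mathrm{sig}^q(x-s),\qquad x(t)\in\mathbb R^n.$$ Let $\bar\alpha=\epsilon_1 2^{(1+p)/2}$ and $\bar\beta=\epsilon_2 n^{(1-q)/2}2^{(1+q)/2}$. If $\bar\alpha-2\delta>0$ and $\bar\beta-2\delta>0$, then for every initial condition and every solution, $x(t)=s(t)$ for all $t\ge T_{\max}=\frac{2}{(\bar\alpha-2\delta)(1-p)}+\frac{2}{(\bar\beta-2\delta)(q-1)}$.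
   Context: For $x\in\mathbb R^n$ and $r>0$, $\mathrm{sig}^r(x)=(\mathrm{sign}(x^1)|x^1|^r,\dots,\mathrm{sign}(x^n)|x^n|^r)^T$. QUAD condition with constant $\delta>0$: $(x-y)^T(f(x)-f(y))\le\delta(x-y)^T(x-y)$ for all $x,y\in\mathbb R^n$. *)

theory Defs
  imports "HOL-Analysis.Analysis"
begin

definition sig :: "real \<Rightarrow> real^'n \<Rightarrow> real^'n" where
  "sig r x = (\<chi> i. sgn (x $ i) * \<bar>x $ i\<bar> powr r)"

definition QUAD :: "(real^'n \<Rightarrow> real^'n) \<Rightarrow> real \<Rightarrow> bool" where
  "QUAD f \<delta> \<longleftrightarrow> (\<forall>x y. (x - y) \<bullet> (f x - f y) \<le> \<delta> * ((x - y) \<bullet> (x - y)))"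

end

theory Submission imports Defs begin
lemma bound_le:
  fixes h h' :: "real \<Rightarrow> real"
  assumes ab: "a \<le> b"
    and d: "\<And>t. t \<in> {a..b} \<Longrightarrow> (h has_real_derivative h' t) (at t within {a..b})"
    and k: "\<And>t. t \<in> {a<..<b} \<Longrightarrow> h' t \<le> k"
  shows "h b - h a \<le> k * (b - a)"
proof (cases "a = b")
  case True then show ?thesis by simp
next
  case False
  then have "a < b" using ab by simp
  from mvt_simple[OF this, of h "\<lambda>t y. h' t * y"] d
  obtain x where x: "x \<in> {a<..<b}" "h b - h a = h' x * (b - a)"
    by (auto simp: has_field_derivative_def)
  then show ?thesis using k[OF x(1)] \<open>a < b\<close> by (simp add: mult_right_mono)
qed
lemma powr_deriv: "(V has_real_derivative V' t) (at t within S) \<Longrightarrow> V t > 0 \<Longrightarrow> ((\<lambda>t. V t powr r) has_real_derivative r * V t powr (r - 1) * V' t) (at t within S)"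
  by (auto intro!: derivative_eq_intros)

lemma finite_time:
  fixes V V' :: "real \<Rightarrow> real" and c1 c2 a b t :: real
  assumes V0: "\<And>t. t \<ge> 0 \<Longrightarrow> V t \<ge> 0"
  and dV: "\<And>t. t \<ge> 0 \<Longrightarrow> (V has_real_derivative V' t) (at t within {0..})"
  and small: "\<And>t. t \<ge> 0 \<Longrightarrow> V t \<le> 1 \<Longrightarrow> V' t \<le> - c1 * V t powr a"
  and large: "\<And>t. t \<ge> 0 \<Longrightarrow> V t \<ge> 1 \<Longrightarrow> V' t \<le> - c2 * V t powr b"
  and c1: "c1 > 0" and c2: "c2 > 0" and a: "0 < a" "a < 1" and b: "b > 1"
  and t: "t \<ge> 1 / (c1 * (1 - a)) + 1 / (c2 * (b - 1))"
  shows "V t = 0"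
proof -
  have dVi: "(V has_real_derivative V' t) (at t within {u..v})" if "0 \<le> u" "t \<in> {u..v}" for u v t
    by (rule DERIV_subset[OF dV]) (use that in auto)
  have Vneg: "V' t \<le> 0" if "t \<ge> 0" for t
  proof (cases "V t \<le> 1")
    case True
    have "0 \<le> c1 * V t powr a" using c1 by simp
    then show ?thesis using small[OF that True] by linarith
  next
    case False
    have "0 \<le> c2 * V t powr b" using c2 by simp
    then show ?thesis using large[OF that] False by linarith
  qed
  have mono: "V v \<le> V u" if "0 \<le> u" "u \<le> v" for u v
  proof -
    have "V v - V u \<le> 0 * (v - u)"
      by (rule bound_le[OF that(2)]) (use dVi[OF that(1)] Vneg that in auto)
    then show ?thesis by simp
  qed
  define T1 where "T1 = 1 / (c1 * (1 - a))"
  define T2 where "T2 = 1 / (c2 * (b - 1))"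
  have T1: "T1 > 0" "c1 * (1 - a) * T1 = 1" using c1 a unfolding T1_def by auto
  have T2: "T2 > 0" "c2 * (b - 1) * T2 = 1" using c2 b unfolding T2_def by auto
  have "\<exists>t1\<in>{0..T2}. V t1 \<le> 1"
  proof (rule ccontr)
    assume "\<not> ?thesis"
    then have gt: "V t > 1" if "t \<in> {0..T2}" for t using that by force
    define h where "h = (\<lambda>t. - (V t powr (1 - b)))"
    have hd: "(h has_real_derivative - ((1 - b) * V t powr (1 - b - 1) * V' t)) (at t within {0..T2})"
      if "t \<in> {0..T2}" for t
      unfolding h_def
      by (rule DERIV_minus[OF powr_deriv[OF dVi]]) (use gt[OF that] that in auto)
    have hk: "- ((1 - b) * V t powr (1 - b - 1) * V' t) \<le> - (c2 * (b - 1))" if "t \<in> {0<..<T2}" for t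
    proof -
      have t0: "t \<ge> 0" "t \<in> {0..T2}" using that by auto
      have Vp: "V t > 1" using gt[OF t0(2)] .
      have "V' t \<le> - c2 * V t powr b" using large[OF t0(1)] Vp by simp
      then have "(b - 1) * V t powr (- b) * V' t \<le> (b - 1) * V t powr (- b) * (- c2 * V t powr b)"
        using b by (intro mult_left_mono) auto
      also have "\<dots> = - c2 * (b - 1) * (V t powr (- b) * V t powr b)" by simp
      also have "V t powr (- b) * V t powr b = 1" using Vp by (simp add: powr_add[symmetric])
      finally show ?thesis by (simp add: algebra_simps)
    qed
    have "h T2 - h 0 \<le> - (c2 * (b - 1)) * (T2 - 0)"
      by (rule bound_le[OF less_imp_le[OF T2(1)] hd hk])
    then have "V T2 powr (1 - b) \<ge> 1 + V 0 powr (1 - b)" using T2 unfolding h_def by (simp add: algebra_simps)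
    moreover have "V T2 powr (1 - b) < 1" using gt[of T2] T2 b by (intro powr_less_one) auto
    moreover have "V 0 powr (1 - b) \<ge> 0" by simp
    ultimately show False by simp
  qed
  then obtain t1 where t1: "t1 \<in> {0..T2}" "V t1 \<le> 1" by blast
  have "\<exists>t2\<in>{t1..t1 + T1}. V t2 = 0"
  proof (rule ccontr)
    assume "\<not> ?thesis"
    then have gt: "V t > 0" if "t \<in> {t1..t1 + T1}" for t using that V0[of t] t1 by force
    have le1: "V t \<le> 1" if "t \<in> {t1..t1 + T1}" for t using mono[of t1 t] t1 that by auto
    define g where "g = (\<lambda>t. V t powr (1 - a))"
    have gd: "(g has_real_derivative ((1 - a) * V t powr (1 - a - 1) * V' t)) (at t within {t1..t1+T1})"
      if "t \<in> {t1..t1+T1}" for t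
      unfolding g_def
      by (rule powr_deriv[OF dVi]) (use gt[OF that] that t1 in auto)
    have gk: "(1 - a) * V t powr (1 - a - 1) * V' t \<le> - (c1 * (1 - a))" if "t \<in> {t1<..<t1+T1}" for t
    proof -
      have t0: "t \<ge> 0" "t \<in> {t1..t1+T1}" using that t1 by auto
      have Vp: "V t > 0" using gt[OF t0(2)] .
      have "V' t \<le> - c1 * V t powr a" using small[OF t0(1) le1[OF t0(2)]] .
      then have "(1 - a) * V t powr (- a) * V' t \<le> (1 - a) * V t powr (- a) * (- c1 * V t powr a)"
        using a by (intro mult_left_mono) auto
      also have "\<dots> = - c1 * (1 - a) * (V t powr (- a) * V t powr a)" by simp
      also have "V t powr (- a) * V t powr a = 1" using Vp by (simp add: powr_add[symmetric])
      finally show ?thesis by (simp add: algebra_simps)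
    qed
    have "g (t1 + T1) - g t1 \<le> - (c1 * (1 - a)) * (t1 + T1 - t1)"
      by (rule bound_le[OF _ gd gk]) (use T1 in auto)
    then have "g (t1 + T1) \<le> g t1 - 1" using T1 by (simp add: algebra_simps)
    moreover have "g t1 \<le> 1" unfolding g_def using t1 V0[of t1] a by (intro powr_le1) auto
    moreover have "g (t1 + T1) > 0" unfolding g_def using gt[of "t1 + T1"] T1 by auto
    ultimately show False by simp
  qed
  then obtain t2 where t2: "t2 \<in> {t1..t1 + T1}" "V t2 = 0" by blast
  have "t2 \<le> t" using t t1 t2 unfolding T1_def T2_def by auto
  then have "V t \<le> V t2" using mono[of t2 t] t1 t2 by auto
  then show ?thesis using t2 V0[of t] t1 t2 \<open>t2 \<le> t\<close> by auto
qed

lemma inner_deriv: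
  assumes "(e has_vector_derivative d) (at t within S)"
  shows "((\<lambda>t. e t \<bullet> e t / 2) has_real_derivative e t \<bullet> d) (at t within S)"
proof -
  have "((\<lambda>t. e t \<bullet> e t) has_derivative (\<lambda>h. e t \<bullet> (h *\<^sub>R d) + (h *\<^sub>R d) \<bullet> e t)) (at t within S)"
    using assms unfolding has_vector_derivative_def by (rule has_derivative_inner[OF _ assms[unfolded has_vector_derivative_def]])
  moreover have "(\<lambda>h. e t \<bullet> (h *\<^sub>R d) + (h *\<^sub>R d) \<bullet> e t) = (*) (2 * (e t \<bullet> d))"
    by (auto simp: fun_eq_iff inner_commute algebra_simps)
  ultimately have "((\<lambda>t. e t \<bullet> e t) has_real_derivative 2 * (e t \<bullet> d)) (at t within S)"
    unfolding has_field_derivative_def by simp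
  from DERIV_cdivide[OF this, of 2] show ?thesis by simp
qed

lemma le_powr_small: "0 \<le> (z::real) \<Longrightarrow> z \<le> 1 \<Longrightarrow> 0 < a \<Longrightarrow> a \<le> 1 \<Longrightarrow> z \<le> z powr a"
  using powr_mono'[of a 1 z] by (cases "z = 0") auto

lemma sub_powr:
  fixes u v a :: real
  assumes "0 \<le> u" "0 \<le> v" "0 < a" "a \<le> 1"
  shows "(u + v) powr a \<le> u powr a + v powr a"
proof (cases "u + v = 0")
  case True then show ?thesis by simp
next
  case False
  define w where "w = u + v"
  have w: "w > 0" using False assms unfolding w_def by simp
  have "u / w \<le> (u / w) powr a" using assms w by (intro le_powr_small) (auto simp: w_def)
  moreover have "v / w \<le> (v / w) powr a" using assms w by (intro le_powr_small) (auto simp: w_def)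
  moreover have "u / w + v / w = 1"
  proof -
    have "u / w + v / w = w / w" unfolding w_def by (rule add_divide_distrib[symmetric])
    also have "\<dots> = 1" using w by simp
    finally show ?thesis .
  qed
  ultimately have "1 \<le> (u / w) powr a + (v / w) powr a" by linarith
  then have "w powr a * 1 \<le> w powr a * ((u / w) powr a + (v / w) powr a)"
    by (intro mult_left_mono) auto
  also have "\<dots> = u powr a + v powr a" using w by (simp add: powr_divide distrib_left)
  finally show ?thesis by (simp add: w_def)
qed

lemma sum_powr_le:
  fixes y :: "'i \<Rightarrow> real"
  assumes "finite S" "\<And>i. i \<in> S \<Longrightarrow> 0 \<le> y i" "0 < a" "a \<le> 1"
  shows "(\<Sum>i\<in>S. y i) powr a \<le> (\<Sum>i\<in>S. y i powr a)"
  using assms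
proof (induction S rule: finite_induct)
  case empty then show ?case by simp
next
  case (insert j S)
  have "(\<Sum>i\<in>insert j S. y i) powr a = (y j + (\<Sum>i\<in>S. y i)) powr a" using insert by simp
  also have "\<dots> \<le> y j powr a + (\<Sum>i\<in>S. y i) powr a"
    using insert by (intro sub_powr) (auto intro: sum_nonneg)
  also have "\<dots> \<le> y j powr a + (\<Sum>i\<in>S. y i powr a)" using insert by simp
  finally show ?case using insert by simp
qed

lemma jensen_powr:
  fixes y :: "'i \<Rightarrow> real"
  assumes fin: "finite S" and y: "\<And>i. i \<in> S \<Longrightarrow> 0 \<le> y i" and b: "1 \<le> b"
  shows "(\<Sum>i\<in>S. y i) powr b \<le> real (card S) powr (b - 1) * (\<Sum>i\<in>S. y i powr b)"
proof -
  define S' where "S' = {i\<in>S. y i > 0}"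
  have S'S: "S' \<subseteq> S" and finS': "finite S'" using fin unfolding S'_def by auto
  have ypos: "0 < y i" if "i \<in> S" "y i \<noteq> 0" for i using y[OF that(1)] that(2) by linarith
  have sum1: "(\<Sum>i\<in>S. y i) = (\<Sum>i\<in>S'. y i)"
    by (rule sum.mono_neutral_right[OF fin S'S]) (use ypos in \<open>auto simp: S'_def\<close>)
  have sum2: "(\<Sum>i\<in>S. y i powr b) = (\<Sum>i\<in>S'. y i powr b)"
    by (rule sum.mono_neutral_right[OF fin S'S]) (use ypos in \<open>auto simp: S'_def\<close>)
  have rhs0: "0 \<le> real (card S) powr (b - 1) * (\<Sum>i\<in>S. y i powr b)"
    by (intro mult_nonneg_nonneg sum_nonneg) auto
  show ?thesis
  proof (cases "S' = {}")
    case True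
    then show ?thesis using sum1 rhs0 by simp
  next
    case False
    define m where "m = real (card S')"
    have m: "m > 0" using False finS' unfolding m_def by (simp add: card_gt_0_iff)
    have "(\<Sum>i\<in>S'. (1 / m) *\<^sub>R y i) powr b \<le> (\<Sum>i\<in>S'. (1 / m) * y i powr b)"
    proof (rule convex_on_sum[OF finS' False powr_convex[OF b]])
      show "(\<Sum>i\<in>S'. 1 / m) = 1" using m by (simp add: m_def)
    qed (use m in \<open>auto simp: S'_def\<close>)
    then have "(\<Sum>i\<in>S'. y i) powr b / m powr b \<le> (\<Sum>i\<in>S'. y i powr b) / m"
      by (simp add: sum_divide_distrib[symmetric] powr_divide)
    then have "(\<Sum>i\<in>S'. y i) powr b \<le> m powr b / m * (\<Sum>i\<in>S'. y i powr b)"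
      using m by (simp add: field_simps)
    also have "m powr b / m = m powr (b - 1)" using m by (simp add: powr_diff)
    also have "m powr (b - 1) \<le> real (card S) powr (b - 1)"
      using b card_mono[OF fin S'S] m unfolding m_def by (intro powr_mono2) auto
    then have "m powr (b - 1) * (\<Sum>i\<in>S'. y i powr b) \<le> real (card S) powr (b - 1) * (\<Sum>i\<in>S'. y i powr b)"
      by (intro mult_right_mono sum_nonneg) auto
    finally show ?thesis using sum1 sum2 by simp
  qed
qed

lemma sq_powr: "((v::real)^2) powr c = \<bar>v\<bar> powr (2 * c)"
proof (cases "v = 0")
  case True then show ?thesis by simp
next
  case False
  have "v^2 = \<bar>v\<bar> powr 2" using False by (simp add: powr_realpow[symmetric])
  then have "(v^2) powr c = (\<bar>v\<bar> powr 2) powr c" by simp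
  also have "\<dots> = \<bar>v\<bar> powr (2 * c)" by (simp only: powr_powr)
  finally show ?thesis .
qed

lemma sig_term: "(v::real) * (sgn v * \<bar>v\<bar> powr r) = \<bar>v\<bar> powr (1 + r)"
proof (cases "v = 0")
  case True then show ?thesis by simp
next
  case False
  have "v * (sgn v * \<bar>v\<bar> powr r) = \<bar>v\<bar> * \<bar>v\<bar> powr r"
    by (simp add: abs_sgn mult.assoc[symmetric] mult.commute)
  also have "\<dots> = \<bar>v\<bar> powr (1 + r)" using False by (simp add: powr_add)
  finally show ?thesis .
qed

lemma inner_sig: "e \<bullet> sig r e = (\<Sum>i\<in>UNIV. ((e $ i)^2) powr ((1 + r) / 2))"
  unfolding sig_def inner_vec_def by (simp add: sig_term sq_powr add_divide_distrib)

lemma inner_self_sum: "e \<bullet> e = (\<Sum>i\<in>UNIV. (e $ i)^2)"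
  unfolding inner_vec_def by (simp add: power2_eq_square)


theorem theorem3:
  fixes f :: "real^'n \<Rightarrow> real^'n"
    and s x :: "real \<Rightarrow> real^'n"
    and \<delta> \<epsilon>1 \<epsilon>2 p q :: real
  assumes quad: "QUAD f \<delta>" and delta_pos: "\<delta> > 0"
    and eps1: "\<epsilon>1 > 0" and eps2: "\<epsilon>2 > 0"
    and p: "0 < p" "p < 1" and q: "q > 1"
    and s_sol: "\<And>t. t \<ge> 0 \<Longrightarrow> (s has_vector_derivative f (s t)) (at t within {0..})"
    and x_sol: "\<And>t. t \<ge> 0 \<Longrightarrow> (x has_vector_derivative
              (f (x t) - \<epsilon>1 *\<^sub>R sig p (x t - s t) - \<epsilon>2 *\<^sub>R sig q (x t - s t)))
              (at t within {0..})"
    and alpha_cond: "\<epsilon>1 * 2 powr ((1 + p) / 2) - 2 * \<delta> > 0"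
    and beta_cond: "\<epsilon>2 * real CARD('n) powr ((1 - q) / 2) * 2 powr ((1 + q) / 2) - 2 * \<delta> > 0"
  shows "\<forall>t \<ge> 2 / ((\<epsilon>1 * 2 powr ((1 + p) / 2) - 2 * \<delta>) * (1 - p))
              + 2 / ((\<epsilon>2 * real CARD('n) powr ((1 - q) / 2) * 2 powr ((1 + q) / 2) - 2 * \<delta>) * (q - 1)).
           x t = s t"
proof (intro allI impI)
  fix t :: real
  define A where "A = (1 + p) / 2"
  define B where "B = (1 + q) / 2"
  define n where "n = real CARD('n)"
  define \<alpha> where "\<alpha> = \<epsilon>1 * 2 powr A"
  define \<beta> where "\<beta> = \<epsilon>2 * n powr (1 - B) * 2 powr B"
  have A: "0 < A" "A < 1" using p unfolding A_def by auto
  have B: "1 < B" using q unfolding B_def by auto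
  have n: "n > 0" unfolding n_def by simp
  have c1: "\<alpha> - 2 * \<delta> > 0" using alpha_cond unfolding \<alpha>_def A_def by simp
  have qeq: "1 - (1 + q) / 2 = (1 - q) / 2" by (simp add: field_simps)
  have c2: "\<beta> - 2 * \<delta> > 0" using beta_cond unfolding \<beta>_def B_def n_def qeq .
  assume "t \<ge> 2 / ((\<epsilon>1 * 2 powr ((1 + p) / 2) - 2 * \<delta>) * (1 - p))
              + 2 / ((\<epsilon>2 * real CARD('n) powr ((1 - q) / 2) * 2 powr ((1 + q) / 2) - 2 * \<delta>) * (q - 1))"
  then have tT: "t \<ge> 1 / ((\<alpha> - 2 * \<delta>) * (1 - A)) + 1 / ((\<beta> - 2 * \<delta>) * (B - 1))"
  proof -
    have e1: "2 / ((\<epsilon>1 * 2 powr ((1 + p) / 2) - 2 * \<delta>) * (1 - p)) = 1 / ((\<alpha> - 2 * \<delta>) * (1 - A))"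
      using c1 p unfolding \<alpha>_def A_def by (simp add: field_simps)
    have e2: "2 / ((\<epsilon>2 * real CARD('n) powr ((1 - q) / 2) * 2 powr ((1 + q) / 2) - 2 * \<delta>) * (q - 1))
        = 1 / ((\<beta> - 2 * \<delta>) * (B - 1))"
      using c2 q unfolding \<beta>_def B_def n_def qeq by (simp add: field_simps)
    show ?thesis using \<open>t \<ge> _\<close> unfolding e1 e2 .
  qed
  define e where "e = (\<lambda>t. x t - s t)"
  define d where "d = (\<lambda>t. (f (x t) - \<epsilon>1 *\<^sub>R sig p (e t) - \<epsilon>2 *\<^sub>R sig q (e t)) - f (s t))"
  define V where "V = (\<lambda>t. e t \<bullet> e t / 2)"
  define V' where "V' = (\<lambda>t. e t \<bullet> d t)"
  have de: "(e has_vector_derivative d t) (at t within {0..})" if "t \<ge> 0" for t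
    unfolding e_def d_def using has_vector_derivative_diff[OF x_sol[OF that] s_sol[OF that]] by simp
  have dV: "(V has_real_derivative V' t) (at t within {0..})" if "t \<ge> 0" for t
    unfolding V_def V'_def by (rule inner_deriv[OF de[OF that]])
  have V0: "V t \<ge> 0" for t unfolding V_def by simp
  have key: "V' t \<le> 2 * \<delta> * V t - \<alpha> * V t powr A - \<beta> * V t powr B" for t
  proof -
    define y where "y = (\<lambda>i. (e t $ i)^2)"
    define W where "W = e t \<bullet> e t"
    have W: "W = (\<Sum>i\<in>UNIV. y i)" unfolding W_def y_def by (rule inner_self_sum)
    have W2: "W = 2 * V t" unfolding W_def V_def by simp
    have y0: "0 \<le> y i" for i unfolding y_def by simp
    have V'eq: "V' t = e t \<bullet> (f (x t) - f (s t)) - \<epsilon>1 * (e t \<bullet> sig p (e t)) - \<epsilon>2 * (e t \<bullet> sig q (e t))"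
      unfolding V'_def d_def by (simp add: inner_diff_right algebra_simps)
    have Q: "e t \<bullet> (f (x t) - f (s t)) \<le> \<delta> * W"
      using quad unfolding QUAD_def W_def e_def by blast
    have Sp: "e t \<bullet> sig p (e t) = (\<Sum>i\<in>UNIV. y i powr A)"
      unfolding inner_sig y_def A_def ..
    have Sq: "e t \<bullet> sig q (e t) = (\<Sum>i\<in>UNIV. y i powr B)"
      unfolding inner_sig y_def B_def ..
    have P1: "W powr A \<le> (\<Sum>i\<in>UNIV. y i powr A)"
      unfolding W by (rule sum_powr_le) (use y0 A in auto)
    have P2: "W powr B \<le> n powr (B - 1) * (\<Sum>i\<in>UNIV. y i powr B)"
      unfolding W n_def by (rule jensen_powr) (use y0 B in auto)
    have "n powr (1 - B) * W powr B \<le> n powr (1 - B) * (n powr (B - 1) * (\<Sum>i\<in>UNIV. y i powr B))"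
      using P2 by (intro mult_left_mono) auto
    also have "\<dots> = (n powr (1 - B) * n powr (B - 1)) * (\<Sum>i\<in>UNIV. y i powr B)" by simp
    also have "n powr (1 - B) * n powr (B - 1) = 1" using n by (simp add: powr_add[symmetric])
    finally have P2': "n powr (1 - B) * W powr B \<le> (\<Sum>i\<in>UNIV. y i powr B)" by simp
    have WA: "W powr A = 2 powr A * V t powr A" unfolding W2 by (rule powr_mult)
    have WB: "W powr B = 2 powr B * V t powr B" unfolding W2 by (rule powr_mult)
    have "\<epsilon>1 * W powr A \<le> \<epsilon>1 * (e t \<bullet> sig p (e t))" using P1 Sp eps1 by simp
    moreover have "\<epsilon>2 * (n powr (1 - B) * W powr B) \<le> \<epsilon>2 * (e t \<bullet> sig q (e t))" using P2' Sq eps2 by simp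
    moreover have "\<delta> * W = 2 * \<delta> * V t" using W2 by simp
    moreover have "\<epsilon>1 * W powr A = \<alpha> * V t powr A" unfolding WA \<alpha>_def by simp
    moreover have "\<epsilon>2 * (n powr (1 - B) * W powr B) = \<beta> * V t powr B" unfolding WB \<beta>_def by simp
    ultimately show ?thesis using V'eq Q by linarith
  qed
  have small: "V' t \<le> - (\<alpha> - 2 * \<delta>) * V t powr A" if "V t \<le> 1" for t
  proof -
    have "V t \<le> V t powr A" using V0[of t] that A by (intro le_powr_small) auto
    moreover have "0 \<le> \<beta> * V t powr B" using c2 delta_pos by simp
    ultimately show ?thesis using key[of t] delta_pos by (simp add: algebra_simps) (smt (verit) mult_left_mono)
  qed
  have large: "V' t \<le> - (\<beta> - 2 * \<delta>) * V t powr B" if "V t \<ge> 1" for t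
  proof -
    have "V t \<le> V t powr B" using powr_mono[of 1 B "V t"] that B by simp
    moreover have "0 \<le> \<alpha> * V t powr A" using c1 delta_pos by simp
    ultimately show ?thesis using key[of t] delta_pos by (simp add: algebra_simps) (smt (verit) mult_left_mono)
  qed
  have "V t = 0"
    by (rule finite_time[OF V0 dV small large c1 c2 A B tT])
  then have "e t = 0" unfolding V_def by simp
  then show "x t = s t" unfolding e_def by simp
qed

end
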